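(* Let $G$ be a simple graph on the node set $[d]$. Then the graph associahedron $\Delta_{\mathcal{B}(G)}$ is inscribed if and only if $G$ is a disjoint union of complete graphs.
   Context: The graphical building set $\mathcal{B}(G)$ consists of all nonempty $I\subseteq[d]$ such that the induced subgraph $G[I]$ is connected. For $I\subseteq[d]$, $\Delta_I=\mathrm{conv}(e_i:i\in I)$ and $\Delta_{\mathcal{B}(G)}=\sum_{I\in\mathcal{B}(G)}\Delta_I$ (Minkowski sum). A polytope is inscribed if all its vertices lie on a common sphere. *)

theory Defs
  imports "HOL-Analysis.Analysis" "HOL-Library.Set_Algebras"
begin

text \<open>A simple graph on the finite node set UNIV :: 'n set (identified with [d], d = CARD('n)),
  given by a symmetric irreflexive adjacency relation.\<close>
definition simple_graph :: "('n \<Rightarrow> 'n \<Rightarrow> bool) \<Rightarrow> bool" where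
  "simple_graph E \<longleftrightarrow> (\<forall>u v. E u v \<longrightarrow> E v u) \<and> (\<forall>u. \<not> E u u)"

definition induced_connected :: "('n \<Rightarrow> 'n \<Rightarrow> bool) \<Rightarrow> 'n set \<Rightarrow> bool" where
  "induced_connected E I \<longleftrightarrow> I \<noteq> {} \<and>
     (\<forall>u\<in>I. \<forall>v\<in>I. (u, v) \<in> {(x, y). x \<in> I \<and> y \<in> I \<and> E x y}\<^sup>*)"

definition building_set :: "('n \<Rightarrow> 'n \<Rightarrow> bool) \<Rightarrow> 'n set set" where
  "building_set E = {I. induced_connected E I}"

definition simplex_face :: "'n::finite set \<Rightarrow> (real ^ 'n) set" where
  "simplex_face I = convex hull ((\<lambda>i. axis i 1) ` I)"

definition graph_associahedron :: "('n::finite \<Rightarrow> 'n \<Rightarrow> bool) \<Rightarrow> (real ^ 'n) set" where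
  "graph_associahedron E = (\<Sum>I\<in>building_set E. simplex_face I)"

definition inscribed :: "(real ^ 'n) set \<Rightarrow> bool" where
  "inscribed P \<longleftrightarrow> (\<exists>c r. \<forall>v. v extreme_point_of P \<longrightarrow> dist v c = r)"

definition disjoint_union_of_complete_graphs :: "('n \<Rightarrow> 'n \<Rightarrow> bool) \<Rightarrow> bool" where
  "disjoint_union_of_complete_graphs E \<longleftrightarrow>
     (\<forall>u v. u \<noteq> v \<and> (u, v) \<in> {(x, y). E x y}\<^sup>* \<longrightarrow> E u v)"

end

theory Submission
  imports Defs
begin

lemma setsum_mem:
  fixes S :: "'i \<Rightarrow> 'a::comm_monoid_add set"
  assumes "finite A"
  shows "x \<in> (\<Sum>i\<in>A. S i) \<longleftrightarrow> (\<exists>s. (\<forall>i\<in>A. s i \<in> S i) \<and> x = (\<Sum>i\<in>A. s i))"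
  using assms
proof (induction A arbitrary: x rule: finite_induct)
  case empty
  then show ?case by simp
next
  case (insert i F)
  show ?case
  proof
    assume "x \<in> sum S (insert i F)"
    then have "x \<in> S i + sum S F" using insert by simp
    then obtain y z where y: "y \<in> S i" and z: "z \<in> sum S F" and x: "x = y + z"
      by (auto simp: set_plus_def)
    from z insert.IH obtain s where s: "\<forall>j\<in>F. s j \<in> S j" "z = (\<Sum>j\<in>F. s j)" by blast
    define s' where "s' = s(i := y)"
    have "(\<Sum>j\<in>F. s' j) = (\<Sum>j\<in>F. s j)"
      using insert.hyps(2) by (intro sum.cong) (auto simp: s'_def)
    then have "x = (\<Sum>j\<in>insert i F. s' j)"
      using insert x s by (simp add: s'_def)
    moreover have "\<forall>j\<in>insert i F. s' j \<in> S j" using s y by (auto simp: s'_def)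
    ultimately show "\<exists>s. (\<forall>i\<in>insert i F. s i \<in> S i) \<and> x = sum s (insert i F)" by blast
  next
    assume "\<exists>s. (\<forall>i\<in>insert i F. s i \<in> S i) \<and> x = sum s (insert i F)"
    then obtain s where s: "\<forall>j\<in>insert i F. s j \<in> S j" "x = sum s (insert i F)" by blast
    then have "x = s i + sum s F" using insert by simp
    moreover have "sum s F \<in> sum S F" using insert.IH s by blast
    ultimately have "x \<in> S i + sum S F" using s by (auto simp: set_plus_def)
    then show "x \<in> sum S (insert i F)" using insert by simp
  qed
qed

lemma convex_hull_setsum:
  fixes S :: "'i \<Rightarrow> 'a::real_vector set"
  assumes "finite A"
  shows "convex hull (\<Sum>i\<in>A. S i) = (\<Sum>i\<in>A. convex hull (S i))"
  using assms
  by (induction A rule: finite_induct) (auto simp: convex_hull_set_plus)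

lemma finite_setsum:
  fixes S :: "'i \<Rightarrow> 'a::comm_monoid_add set"
  assumes "finite A" "\<forall>i\<in>A. finite (S i)"
  shows "finite (\<Sum>i\<in>A. S i)"
  using assms
  by (induction A rule: finite_induct) (auto simp: set_plus_image)

lemma simplex_face_coords:
  fixes s :: "real ^ 'n::finite"
  assumes "s \<in> simplex_face I"
  shows "(\<forall>j. 0 \<le> s$j) \<and> (\<forall>j. j \<notin> I \<longrightarrow> s$j = 0) \<and> (\<Sum>j\<in>UNIV. s$j) = 1"
proof -
  define K where "K = {s::real^'n. (\<forall>j. 0 \<le> s$j) \<and> (\<forall>j. j \<notin> I \<longrightarrow> s$j = 0) \<and> (\<Sum>j\<in>UNIV. s$j) = 1}"
  have "convex K"
    unfolding convex_def K_def
    by (auto simp: sum.distrib sum_distrib_left[symmetric])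
  moreover have "(\<lambda>i. axis i 1) ` I \<subseteq> K"
    by (auto simp: K_def axis_def)
  ultimately have "simplex_face I \<subseteq> K"
    unfolding simplex_face_def by (rule hull_minimal[rotated])
  then show ?thesis using assms by (auto simp: K_def)
qed

lemma simplex_face_max:
  fixes s a :: "real ^ 'n::finite"
  assumes s: "s \<in> simplex_face I" and j: "j \<in> I" and le: "\<forall>k\<in>I. a$k \<le> a$j"
  shows "a \<bullet> s \<le> a$j"
    and "(\<forall>k\<in>I. k \<noteq> j \<longrightarrow> a$k < a$j) \<Longrightarrow> a \<bullet> s = a$j \<Longrightarrow> s = axis j 1"
proof -
  note c = simplex_face_coords[OF s]
  have eq: "a$j - a \<bullet> s = (\<Sum>k\<in>UNIV. (a$j - a$k) * s$k)"
  proof -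
    have "a$j = (\<Sum>k\<in>UNIV. a$j * s$k)" using c by (simp add: sum_distrib_left[symmetric])
    then show ?thesis by (simp add: inner_vec_def sum_subtractf left_diff_distrib)
  qed
  have nn: "\<forall>k\<in>UNIV. 0 \<le> (a$j - a$k) * s$k"
    using c le by (metis diff_ge_0_iff_ge mult_eq_0_iff mult_nonneg_nonneg order_refl)
  then show "a \<bullet> s \<le> a$j" using eq sum_nonneg[of UNIV] by (smt (verit) sum_nonneg)
  assume strict: "\<forall>k\<in>I. k \<noteq> j \<longrightarrow> a$k < a$j" and e: "a \<bullet> s = a$j"
  then have "(\<Sum>k\<in>UNIV. (a$j - a$k) * s$k) = 0" using eq by simp
  then have z: "\<forall>k. (a$j - a$k) * s$k = 0"
    using nn sum_nonneg_eq_0_iff[of UNIV "\<lambda>k. (a$j - a$k) * s$k"] by simp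
  have z2: "\<forall>k. k \<noteq> j \<longrightarrow> s$k = 0"
  proof (intro allI impI)
    fix k assume "k \<noteq> j"
    show "s$k = 0"
    proof (cases "k \<in> I")
      case True then have "a$j - a$k \<noteq> 0" using strict \<open>k \<noteq> j\<close> by force
      then show ?thesis using z[rule_format, of k] by simp
    next
      case False then show ?thesis using c by simp
    qed
  qed
  have "(\<Sum>k\<in>UNIV. s$k) = s$j"
    using z2 by (subst sum.remove[of _ j]) auto
  then have "s$j = 1" using c by simp
  then show "s = axis j 1" using z2 by (auto simp: vec_eq_iff axis_def)
qed

lemma P_convex_hull:
  fixes B :: "'n::finite set set"
  shows "(\<Sum>I\<in>B. simplex_face I) = convex hull (\<Sum>I\<in>B. (\<lambda>i. axis i 1 :: real^'n) ` I)"
  by (simp add: convex_hull_setsum simplex_face_def)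

lemma axis_in_simplex_face: "i \<in> I \<Longrightarrow> axis i 1 \<in> simplex_face I"
  unfolding simplex_face_def by (rule hull_inc) auto

lemma greedy_extreme:
  fixes B :: "'n::finite set set" and a :: "real^'n"
  assumes f: "\<forall>I\<in>B. f I \<in> I \<and> (\<forall>k\<in>I. k \<noteq> f I \<longrightarrow> a$k < a$(f I))"
  shows "(\<Sum>I\<in>B. axis (f I) 1) extreme_point_of (\<Sum>I\<in>B. simplex_face I)"
proof -
  have finB: "finite B" by simp
  define P where "P = (\<Sum>I\<in>B. simplex_face I)"
  define v where "v = (\<Sum>I\<in>B. axis (f I) 1 :: real^'n)"
  have cP: "convex P" unfolding P_def P_convex_hull by simp
  have vP: "v \<in> P" unfolding P_def v_def setsum_mem[OF finB]
    by (rule exI[of _ "\<lambda>I. axis (f I) 1"]) (use f axis_in_simplex_face in auto)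
  have av: "a \<bullet> v = (\<Sum>I\<in>B. a$(f I))" by (simp add: v_def inner_sum_right inner_axis)
  have le: "\<forall>k\<in>I. a$k \<le> a$(f I)" if "I \<in> B" for I
    using f that by (metis order_less_imp_le order_refl)
  have main: "a \<bullet> y \<le> a \<bullet> v \<and> (a \<bullet> y = a \<bullet> v \<longrightarrow> y = v)" if "y \<in> P" for y
  proof -
    from that obtain s where s: "\<forall>I\<in>B. s I \<in> simplex_face I" "y = (\<Sum>I\<in>B. s I)"
      unfolding P_def setsum_mem[OF finB] by blast
    have ay: "a \<bullet> y = (\<Sum>I\<in>B. a \<bullet> s I)" by (simp add: s inner_sum_right)
    have each: "a \<bullet> s I \<le> a$(f I)" if "I \<in> B" for I
      using simplex_face_max(1)[of "s I" I "f I" a] s f le that by blast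
    have 1: "a \<bullet> y \<le> a \<bullet> v" unfolding ay av by (rule sum_mono) (use each in auto)
    have 2: "y = v" if eq: "a \<bullet> y = a \<bullet> v"
    proof -
      have "(\<Sum>I\<in>B. a$(f I) - a \<bullet> s I) = 0" using eq ay av by (simp add: sum_subtractf)
      then have "\<forall>I\<in>B. a$(f I) - a \<bullet> s I = 0"
        using sum_nonneg_eq_0_iff[OF finB, of "\<lambda>I. a$(f I) - a \<bullet> s I"] each by auto
      then have "\<forall>I\<in>B. s I = axis (f I) 1"
        using simplex_face_max(2)[of _ _ _ a] s f le by (metis eq_iff_diff_eq_0)
      then show "y = v" unfolding v_def s by simp
    qed
    show ?thesis using 1 2 by blast
  qed
  have "P \<inter> {y. a \<bullet> y = a \<bullet> v} face_of P"
    by (rule face_of_Int_supporting_hyperplane_le[OF cP]) (use main in auto)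
  moreover have "P \<inter> {y. a \<bullet> y = a \<bullet> v} = {v}" using main vP by auto
  ultimately have "{v} face_of P" by simp
  then show ?thesis unfolding face_of_singleton P_def v_def .
qed

lemma extreme_greedy:
  fixes B :: "'n::finite set set" and x :: "real^'n"
  assumes ne: "\<forall>I\<in>B. I \<noteq> {}"
    and x: "x extreme_point_of (\<Sum>I\<in>B. simplex_face I)"
  shows "\<exists>(a::real^'n) f. (\<forall>I\<in>B. f I \<in> I \<and> (\<forall>k\<in>I. k \<noteq> f I \<longrightarrow> a$k < a$(f I))) \<and> x = (\<Sum>I\<in>B. axis (f I) 1)"
proof -
  have finB: "finite B" by simp
  define P where "P = (\<Sum>I\<in>B. simplex_face I)"
  have "polytope P" unfolding P_def P_convex_hull polytope_def
    by (intro exI[of _ "(\<Sum>I\<in>B. (\<lambda>i. axis i 1 :: real^'n) ` I)"]) (simp add: finite_setsum)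
  then have "polyhedron P" by (rule polytope_imp_polyhedron)
  moreover have "{x} face_of P" using x by (simp add: face_of_singleton P_def)
  ultimately have "{x} exposed_face_of P" by (simp add: exposed_face_of_polyhedron)
  then obtain a b where ab: "P \<subseteq> {y. a \<bullet> y \<le> b}" "{x} = P \<inter> {y. a \<bullet> y = b}"
    unfolding exposed_face_of_def by blast
  have xP: "x \<in> P" and axb: "a \<bullet> x = b" using ab(2) by auto
  then obtain s where s: "\<forall>I\<in>B. s I \<in> simplex_face I" "x = (\<Sum>I\<in>B. s I)"
    unfolding P_def setsum_mem[OF finB] by blast
  have uniq: "a \<bullet> y \<le> a \<bullet> s I0 \<and> (a \<bullet> y = a \<bullet> s I0 \<longrightarrow> y = s I0)"
    if I0: "I0 \<in> B" and y: "y \<in> simplex_face I0" for I0 y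
  proof -
    define s' where "s' = s(I0 := y)"
    have "(\<Sum>I\<in>B. s' I) = s' I0 + (\<Sum>I\<in>B-{I0}. s' I)" using I0 finB by (simp add: sum.remove)
    also have "(\<Sum>I\<in>B-{I0}. s' I) = (\<Sum>I\<in>B-{I0}. s I)" by (rule sum.cong) (auto simp: s'_def)
    also have "(\<Sum>I\<in>B-{I0}. s I) = x - s I0" using I0 finB s(2) by (simp add: sum.remove)
    finally have x': "(\<Sum>I\<in>B. s' I) = x - s I0 + y" by (simp add: s'_def)
    have "(\<Sum>I\<in>B. s' I) \<in> P" unfolding P_def setsum_mem[OF finB]
      by (rule exI[of _ s']) (use s y in \<open>auto simp: s'_def\<close>)
    then have inP: "x - s I0 + y \<in> P" using x' by simp
    then have "a \<bullet> (x - s I0 + y) \<le> b" using ab(1) by auto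
    then have 1: "a \<bullet> y \<le> a \<bullet> s I0" using axb by (simp add: inner_diff_right inner_add_right)
    have 2: "y = s I0" if "a \<bullet> y = a \<bullet> s I0"
    proof -
      have "a \<bullet> (x - s I0 + y) = b" using that axb by (simp add: inner_diff_right inner_add_right)
      then have "x - s I0 + y \<in> {x}" using ab(2) inP by auto
      then show ?thesis by simp
    qed
    show ?thesis using 1 2 by blast
  qed
  have "\<forall>I\<in>B. \<exists>j. j \<in> I \<and> (\<forall>k\<in>I. k \<noteq> j \<longrightarrow> a$k < a$j) \<and> s I = axis j 1"
  proof
    fix I assume I: "I \<in> B"
    have finI: "finite I" by simp
    define m where "m = Max ((\<lambda>k. a$k) ` I)"
    have "m \<in> (\<lambda>k. a$k) ` I" unfolding m_def using ne I finI by (intro Max_in) auto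
    then obtain j where j: "j \<in> I" "a$j = m" by auto
    have le: "\<forall>k\<in>I. a$k \<le> a$j" using j finI unfolding m_def by auto
    have "a$j \<le> a \<bullet> s I" using uniq[OF I axis_in_simplex_face[OF j(1)]] by (simp add: inner_axis)
    moreover have "a \<bullet> s I \<le> a$j" using simplex_face_max(1)[OF _ j(1) le] s I by blast
    ultimately have eqj: "a \<bullet> s I = a$j" by simp
    then have sj: "s I = axis j 1" using uniq[OF I axis_in_simplex_face[OF j(1)]] by (simp add: inner_axis)
    have "\<forall>k\<in>I. k \<noteq> j \<longrightarrow> a$k < a$j"
    proof (intro ballI impI)
      fix k assume k: "k \<in> I" "k \<noteq> j"
      show "a$k < a$j"
      proof (rule ccontr)
        assume "\<not> a$k < a$j"
        then have "a$k = a$j" using le k by force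
        then have "axis k 1 = s I" using uniq[OF I axis_in_simplex_face[OF k(1)]] eqj
          by (simp add: inner_axis)
        then show False using sj k(2) by (simp add: axis_eq_axis)
      qed
    qed
    then show "\<exists>j. j \<in> I \<and> (\<forall>k\<in>I. k \<noteq> j \<longrightarrow> a$k < a$j) \<and> s I = axis j 1"
      using j sj by blast
  qed
  from bchoice[OF this] obtain f where f: "\<forall>I\<in>B. f I \<in> I \<and> (\<forall>k\<in>I. k \<noteq> f I \<longrightarrow> a$k < a$(f I)) \<and> s I = axis (f I) 1"
    by blast
  have F1: "x = (\<Sum>I\<in>B. axis (f I) 1)" unfolding s(2) by (rule sum.cong) (use f in auto)
  have F2: "\<forall>I\<in>B. f I \<in> I \<and> (\<forall>k\<in>I. k \<noteq> f I \<longrightarrow> a$k < a$(f I))" using f by blast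
  have "\<exists>f. (\<forall>I\<in>B. f I \<in> I \<and> (\<forall>k\<in>I. k \<noteq> f I \<longrightarrow> a$k < a$(f I))) \<and> x = (\<Sum>I\<in>B. axis (f I) 1)"
    by (rule exI[of _ f], rule conjI[OF F2 F1])
  then show ?thesis by blast
qed

lemma rank_sum:
  fixes a :: "'n \<Rightarrow> real" and g :: "nat \<Rightarrow> real"
  assumes fin: "finite C" and inj: "inj_on a C"
  shows "(\<Sum>j\<in>C. g (card {k\<in>C. a k < a j})) = (\<Sum>m<card C. g m)"
proof -
  define r where "r j = card {k\<in>C. a k < a j}" for j
  have injr: "inj_on r C"
  proof (rule inj_onI)
    fix j l assume j: "j \<in> C" and l: "l \<in> C" and e: "r j = r l"
    show "j = l"
    proof (rule ccontr)
      assume ne: "j \<noteq> l"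
      then have "a j \<noteq> a l" using inj j l by (meson inj_on_eq_iff)
      then consider "a j < a l" | "a l < a j" by linarith
      then show False
      proof cases
        case 1
        have "{k\<in>C. a k < a j} \<subset> {k\<in>C. a k < a l}" using 1 j by auto
        then have "r j < r l" unfolding r_def using fin by (intro psubset_card_mono) auto
        then show False using e by simp
      next
        case 2
        have "{k\<in>C. a k < a l} \<subset> {k\<in>C. a k < a j}" using 2 l by auto
        then have "r l < r j" unfolding r_def using fin by (intro psubset_card_mono) auto
        then show False using e by simp
      qed
    qed
  qed
  have sub: "r ` C \<subseteq> {..<card C}"
  proof
    fix m assume "m \<in> r ` C"
    then obtain j where j: "j \<in> C" "m = r j" by auto
    have "{k\<in>C. a k < a j} \<subseteq> C - {j}" by auto
    then have "r j \<le> card (C - {j})" unfolding r_def using fin by (intro card_mono) auto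
    also have "\<dots> < card C" using j fin
      by (metis card_Diff1_less)
    finally show "m \<in> {..<card C}" using j by simp
  qed
  have "card (r ` C) = card {..<card C}" using card_image[OF injr] by simp
  then have eq: "r ` C = {..<card C}" using sub by (intro card_subset_eq) auto
  have "(\<Sum>m<card C. g m) = (\<Sum>m\<in>r ` C. g m)" using eq by simp
  also have "\<dots> = (\<Sum>j\<in>C. g (r j))" by (rule sum.reindex[OF injr, unfolded comp_def])
  finally show ?thesis unfolding r_def by simp
qed

lemma card_supsets:
  assumes "finite L" "j \<in> L"
  shows "card {I. j \<in> I \<and> I \<subseteq> L} = 2 ^ (card L - 1)"
proof -
  have "{I. j \<in> I \<and> I \<subseteq> L} = insert j ` Pow (L - {j})"
  proof
    show "{I. j \<in> I \<and> I \<subseteq> L} \<subseteq> insert j ` Pow (L - {j})"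
    proof
      fix I assume "I \<in> {I. j \<in> I \<and> I \<subseteq> L}"
      then have "I = insert j (I - {j})" "I - {j} \<in> Pow (L - {j})" by auto
      then show "I \<in> insert j ` Pow (L - {j})" by blast
    qed
    show "insert j ` Pow (L - {j}) \<subseteq> {I. j \<in> I \<and> I \<subseteq> L}" using assms by auto
  qed
  moreover have "inj_on (insert j) (Pow (L - {j}))"
    by (rule inj_onI) (metis Diff_insert_absorb PowD insert_subset subset_Diff_insert)
  ultimately have "card {I. j \<in> I \<and> I \<subseteq> L} = card (Pow (L - {j}))" by (simp add: card_image)
  also have "\<dots> = 2 ^ (card L - 1)" using assms by (simp add: card_Pow)
  finally show ?thesis .
qed

lemma coord_sum_axis:
  fixes f :: "'a \<Rightarrow> 'n::finite"
  assumes "finite B"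
  shows "(\<Sum>I\<in>B. axis (f I) (1::real)) $ j = real (card {I\<in>B. f I = j})"
proof -
  have "(\<Sum>I\<in>B. axis (f I) (1::real)) $ j = (\<Sum>I\<in>B. if f I = j then 1 else 0)"
    by (simp add: axis_def eq_commute)
  also have "\<dots> = real (card {I\<in>B. f I = j})"
    using assms by (simp add: sum.If_cases Int_def)
  finally show ?thesis .
qed

lemma conn_R:
  assumes "induced_connected E I" "u \<in> I" "v \<in> I"
  shows "(u, v) \<in> {(x, y). E x y}\<^sup>*"
proof -
  have "(u, v) \<in> {(x, y). x \<in> I \<and> y \<in> I \<and> E x y}\<^sup>*"
    using assms unfolding induced_connected_def by blast
  moreover have "{(x, y). x \<in> I \<and> y \<in> I \<and> E x y} \<subseteq> {(x, y). E x y}" by auto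
  ultimately show ?thesis using rtrancl_mono by blast
qed

lemma backward:
  fixes E :: "'n::finite \<Rightarrow> 'n \<Rightarrow> bool"
  assumes sg: "simple_graph E" and D: "disjoint_union_of_complete_graphs E"
  shows "inscribed (graph_associahedron E)"
proof -
  define R where "R = {(x, y). E x y}\<^sup>*"
  define B where "B = building_set E"
  have Esym: "E u v \<Longrightarrow> E v u" for u v using sg unfolding simple_graph_def by blast
  have symR: "(u, v) \<in> R \<Longrightarrow> (v, u) \<in> R" for u v
  proof -
    have "sym {(x, y). E x y}" using Esym by (auto simp: sym_def)
    then have "sym R" unfolding R_def by (rule sym_rtrancl)
    then show "(u, v) \<in> R \<Longrightarrow> (v, u) \<in> R" by (auto simp: sym_def)
  qed
  have transR: "(u, v) \<in> R \<Longrightarrow> (v, w) \<in> R \<Longrightarrow> (u, w) \<in> R" for u v w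
    unfolding R_def by (rule rtrancl_trans)
  have DR: "u \<noteq> v \<Longrightarrow> (u, v) \<in> R \<Longrightarrow> E u v" for u v
    using D unfolding disjoint_union_of_complete_graphs_def R_def by blast
  define comp where "comp j = {k. (j, k) \<in> R}" for j
  have jcomp: "j \<in> comp j" for j unfolding comp_def R_def by simp
  have comp_eq: "k \<in> comp j \<longleftrightarrow> comp k = comp j" for j k
  proof
    assume "k \<in> comp j"
    then have "(j, k) \<in> R" by (simp add: comp_def)
    then show "comp k = comp j" unfolding comp_def using symR transR by blast
  next
    assume "comp k = comp j" then show "k \<in> comp j" using jcomp by metis
  qed
  have Bne: "\<forall>I\<in>B. I \<noteq> {}" unfolding B_def building_set_def induced_connected_def by auto
  have inB: "I \<in> B" if ne: "I \<noteq> {}" and cl: "\<And>u v. u \<in> I \<Longrightarrow> v \<in> I \<Longrightarrow> u \<noteq> v \<Longrightarrow> E u v" for I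
    unfolding B_def building_set_def induced_connected_def
  proof (intro CollectI conjI ne ballI)
    fix u v assume "u \<in> I" "v \<in> I"
    then show "(u, v) \<in> {(x, y). x \<in> I \<and> y \<in> I \<and> E x y}\<^sup>*"
      using cl by (cases "u = v") (auto intro: r_into_rtrancl)
  qed
  let ?K = "(\<Sum>C\<in>range comp. (\<Sum>m<card C. (4::real) ^ m))"
  have main: "\<forall>x. x extreme_point_of graph_associahedron E \<longrightarrow> dist x 0 = sqrt ?K"
  proof (intro allI impI)
    fix x assume x: "x extreme_point_of graph_associahedron E"
    obtain a :: "real^'n" and f where af: "\<forall>I\<in>B. f I \<in> I \<and> (\<forall>k\<in>I. k \<noteq> f I \<longrightarrow> a$k < a$(f I))"
      and xf: "x = (\<Sum>I\<in>B. axis (f I) 1)"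
      using extreme_greedy[OF Bne] x unfolding graph_associahedron_def B_def by blast
    have injC: "a$j \<noteq> a$l" if "j \<in> comp i" "l \<in> comp i" "j \<noteq> l" for i j l
    proof -
      have "(j, l) \<in> R" using that symR transR unfolding comp_def by blast
      then have "E j l" using DR that by blast
      then have "{j, l} \<in> B" using Esym by (intro inB) auto
      then show ?thesis using af that(3) by fastforce
    qed
    define L where "L j = {k\<in>comp j. a$k \<le> a$j}" for j
    have key: "{I\<in>B. f I = j} = {I. j \<in> I \<and> I \<subseteq> L j}" for j
    proof
      show "{I\<in>B. f I = j} \<subseteq> {I. j \<in> I \<and> I \<subseteq> L j}"
      proof
        fix I assume I: "I \<in> {I\<in>B. f I = j}"
        then have IB: "I \<in> B" and fj: "f I = j" by auto
        have fI: "f I \<in> I" and fmax: "\<forall>k\<in>I. k \<noteq> f I \<longrightarrow> a$k < a$(f I)" using af IB by auto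
        have jI: "j \<in> I" using fI fj by simp
        have IC: "induced_connected E I" using IB unfolding B_def building_set_def by simp
        have "k \<in> L j" if "k \<in> I" for k
        proof -
          have "(j, k) \<in> R" unfolding R_def by (rule conn_R[OF IC jI that])
          moreover have "a$k \<le> a$j"
          proof (cases "k = j")
            case False then show ?thesis using fmax that fj by force
          qed simp
          ultimately show ?thesis by (simp add: L_def comp_def)
        qed
        then show "I \<in> {I. j \<in> I \<and> I \<subseteq> L j}" using jI by auto
      qed
      show "{I. j \<in> I \<and> I \<subseteq> L j} \<subseteq> {I\<in>B. f I = j}"
      proof
        fix I assume I: "I \<in> {I. j \<in> I \<and> I \<subseteq> L j}"
        then have jI: "j \<in> I" and IL: "I \<subseteq> L j" by auto
        have IB: "I \<in> B"
        proof (rule inB)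
          show "I \<noteq> {}" using jI by auto
          fix u v assume "u \<in> I" "v \<in> I" "u \<noteq> v"
          then have "(j, u) \<in> R" "(j, v) \<in> R" using IL by (auto simp: L_def comp_def)
          then have "(u, v) \<in> R" using symR transR by blast
          then show "E u v" using DR \<open>u \<noteq> v\<close> by blast
        qed
        have "f I = j"
        proof (rule ccontr)
          assume ne: "f I \<noteq> j"
          have fI: "f I \<in> I" and fmax: "\<forall>k\<in>I. k \<noteq> f I \<longrightarrow> a$k < a$(f I)" using af IB by auto
          then have "a$j < a$(f I)" using fmax[rule_format, OF jI] ne by auto
          moreover have "a$(f I) \<le> a$j" using IL \<open>f I \<in> I\<close> by (auto simp: L_def)
          ultimately show False by simp
        qed
        then show "I \<in> {I\<in>B. f I = j}" using IB by simp
      qed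
    qed
    define r where "r j = card {k\<in>comp j. a$k < a$j}" for j
    have Lr: "card (L j) - 1 = r j" for j
    proof -
      have "L j = insert j {k\<in>comp j. a$k < a$j}"
        using injC[of _ j j] jcomp unfolding L_def by (auto simp: order_le_less)
      then have "card (L j) = Suc (r j)" unfolding r_def by (simp add: card_insert_if)
      then show ?thesis by simp
    qed
    have xj: "x$j = 2 ^ r j" for j
    proof -
      have "x$j = real (card {I\<in>B. f I = j})" unfolding xf by (rule coord_sum_axis) simp
      also have "\<dots> = real (card {I. j \<in> I \<and> I \<subseteq> L j})" by (simp add: key)
      also have "\<dots> = 2 ^ (card (L j) - 1)" by (subst card_supsets) (auto simp: L_def jcomp)
      finally show ?thesis using Lr[of j] by simp
    qed
    have sq: "(\<Sum>j\<in>UNIV. x$j * x$j) = (\<Sum>j\<in>UNIV. (4::real) ^ r j)"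
      by (rule sum.cong) (auto simp: xj power_mult_distrib[symmetric])
    also have "\<dots> = (\<Sum>C\<in>range comp. \<Sum>j\<in>{j\<in>UNIV. comp j = C}. (4::real) ^ r j)"
      by (rule sum.group[symmetric]) auto
    also have "\<dots> = ?K"
    proof (rule sum.cong[OF refl])
      fix C assume "C \<in> range comp"
      then obtain i where Ci: "C = comp i" by auto
      have "{j\<in>UNIV. comp j = C} = C" using comp_eq Ci by auto
      then have "(\<Sum>j\<in>{j\<in>UNIV. comp j = C}. (4::real) ^ r j) = (\<Sum>j\<in>C. (4::real) ^ card {k\<in>C. a$k < a$j})"
        using comp_eq Ci unfolding r_def by (intro sum.cong) auto
      also have "\<dots> = (\<Sum>m<card C. (4::real) ^ m)"
        by (rule rank_sum[of C "\<lambda>k. a$k" "\<lambda>m. 4 ^ m"]) (auto simp: Ci inj_on_def dest: injC)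
      finally show "(\<Sum>j\<in>{j\<in>UNIV. comp j = C}. (4::real) ^ r j) = (\<Sum>m<card C. (4::real) ^ m)" .
    qed
    finally have "x \<bullet> x = ?K" by (simp add: inner_vec_def)
    then show "dist x 0 = sqrt ?K" by (simp add: dist_norm norm_eq_sqrt_inner)
  qed
  then show ?thesis unfolding inscribed_def by blast
qed

lemma induced_path:
  assumes "(u, w) \<in> {(x, y). E x y}\<^sup>*" "u \<noteq> w" "\<not> E u w"
  shows "\<exists>p q s. E p q \<and> E q s \<and> p \<noteq> s \<and> \<not> E p s"
  using assms
proof (induction rule: rtrancl_induct)
  case base then show ?case by simp
next
  case (step y z)
  have Eyz: "E y z" using step.hyps(2) by simp
  show ?case
  proof (cases "u = y")
    case True then show ?thesis using Eyz step.prems by simp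
  next
    case False
    show ?thesis
    proof (cases "E u y")
      case True then show ?thesis using Eyz step.prems by blast
    next
      case False2: False
      show ?thesis using step.IH False False2 by blast
    qed
  qed
qed

lemma greedy_vertex:
  fixes E :: "'n::finite \<Rightarrow> 'n \<Rightarrow> bool" and w :: "real^'n"
  assumes inj: "inj (\<lambda>i. w$i)"
  shows "\<exists>v. v extreme_point_of graph_associahedron E \<and>
    (\<forall>j. v$j = real (card {I\<in>building_set E. j \<in> I \<and> (\<forall>k\<in>I. k \<noteq> j \<longrightarrow> w$k < w$j)}))"
proof -
  define B where "B = building_set E"
  have ex: "\<exists>j. I \<noteq> {} \<longrightarrow> j \<in> I \<and> (\<forall>k\<in>I. k \<noteq> j \<longrightarrow> w$k < w$j)" for I :: "'n set"
  proof (cases "I = {}")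
    case False
    have finI: "finite I" by simp
    define m where "m = Max ((\<lambda>k. w$k) ` I)"
    have "m \<in> (\<lambda>k. w$k) ` I" unfolding m_def using False finI by (intro Max_in) auto
    then obtain j where j: "j \<in> I" "w$j = m" by auto
    have "\<forall>k\<in>I. k \<noteq> j \<longrightarrow> w$k < w$j"
    proof (intro ballI impI)
      fix k assume k: "k \<in> I" "k \<noteq> j"
      have "w$k \<le> w$j" using j finI k unfolding m_def by auto
      moreover have "w$k \<noteq> w$j" using inj k(2) unfolding inj_def by blast
      ultimately show "w$k < w$j" by simp
    qed
    then show ?thesis using j by blast
  qed simp
  then obtain f where f: "\<And>I. I \<noteq> {} \<Longrightarrow> f I \<in> I \<and> (\<forall>k\<in>I. k \<noteq> f I \<longrightarrow> w$k < w$(f I))"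
    by metis
  have Bne: "\<forall>I\<in>B. I \<noteq> {}" unfolding B_def building_set_def induced_connected_def by auto
  have fB: "\<forall>I\<in>B. f I \<in> I \<and> (\<forall>k\<in>I. k \<noteq> f I \<longrightarrow> w$k < w$(f I))" using f Bne by blast
  define v where "v = (\<Sum>I\<in>B. axis (f I) (1::real))"
  have ext: "v extreme_point_of graph_associahedron E"
    unfolding v_def graph_associahedron_def B_def using greedy_extreme[OF fB[unfolded B_def]] .
  have "v$j = real (card {I\<in>B. j \<in> I \<and> (\<forall>k\<in>I. k \<noteq> j \<longrightarrow> w$k < w$j)})" for j
  proof -
    have "{I\<in>B. f I = j} = {I\<in>B. j \<in> I \<and> (\<forall>k\<in>I. k \<noteq> j \<longrightarrow> w$k < w$j)}"
    proof (intro Collect_cong conj_cong refl iffI)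
      fix I assume "I \<in> B" "f I = j"
      then show "j \<in> I \<and> (\<forall>k\<in>I. k \<noteq> j \<longrightarrow> w$k < w$j)" using fB by blast
    next
      fix I assume I: "I \<in> B" and jI: "j \<in> I \<and> (\<forall>k\<in>I. k \<noteq> j \<longrightarrow> w$k < w$j)"
      show "f I = j"
      proof (rule ccontr)
        assume ne: "f I \<noteq> j"
        have fI: "f I \<in> I" and fm: "\<forall>k\<in>I. k \<noteq> f I \<longrightarrow> w$k < w$(f I)" using fB I by auto
        have "w$j < w$(f I)" using fm jI ne by auto
        moreover have "w$(f I) < w$j" using jI fI ne by auto
        ultimately show False by simp
      qed
    qed
    moreover have "v$j = real (card {I\<in>B. f I = j})" unfolding v_def by (rule coord_sum_axis) simp
    ultimately show ?thesis by simp
  qed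
  then show ?thesis using ext unfolding B_def by blast
qed

definition Wt :: "'n set \<Rightarrow> ('n \<Rightarrow> nat) \<Rightarrow> ('n \<Rightarrow> real) \<Rightarrow> real^'n::finite" where
  "Wt T idx \<sigma> = (\<chi> i. if i \<in> T then \<sigma> i else 3 + real (idx i))"

lemma Wt_inj:
  assumes "inj idx" "inj_on \<sigma> T" "\<forall>t\<in>T. 0 \<le> \<sigma> t \<and> \<sigma> t \<le> 2"
  shows "inj (\<lambda>i. Wt T idx \<sigma> $ i)"
proof (rule injI)
  fix x y assume e: "Wt T idx \<sigma> $ x = Wt T idx \<sigma> $ y"
  show "x = y"
  proof (cases "x \<in> T"; cases "y \<in> T")
    assume "x \<in> T" "y \<in> T" then show ?thesis using e assms(2) by (simp add: Wt_def inj_on_def)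
  next
    assume "x \<in> T" "y \<notin> T" then show ?thesis using e assms(3) by (simp add: Wt_def) (smt (verit) of_nat_0_le_iff)
  next
    assume "x \<notin> T" "y \<in> T" then show ?thesis using e assms(3) by (simp add: Wt_def) (smt (verit) of_nat_0_le_iff)
  next
    assume "x \<notin> T" "y \<notin> T" then show ?thesis using e assms(1) by (simp add: Wt_def inj_def)
  qed
qed

lemma Wt_notT:
  assumes "\<forall>t\<in>T. \<sigma> t \<le> 2" "j \<notin> T"
  shows "{I\<in>B. j \<in> I \<and> (\<forall>k\<in>I. k \<noteq> j \<longrightarrow> Wt T idx \<sigma> $ k < Wt T idx \<sigma> $ j)} =
         {I\<in>B. j \<in> I \<and> (\<forall>k\<in>I. k \<noteq> j \<longrightarrow> k \<in> T \<or> idx k < idx j)}"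
proof -
  have "(Wt T idx \<sigma> $ k < Wt T idx \<sigma> $ j) = (k \<in> T \<or> idx k < idx j)" for k
  proof (cases "k \<in> T")
    case True
    then have "\<sigma> k \<le> 2" using assms by auto
    then show ?thesis using True assms(2) by (simp add: Wt_def)
  next
    case False then show ?thesis using assms(2) by (simp add: Wt_def)
  qed
  then show ?thesis by simp
qed

lemma Wt_T:
  assumes "\<forall>t\<in>T. \<sigma> t \<le> 2" "t \<in> T"
  shows "{I\<in>B. t \<in> I \<and> (\<forall>k\<in>I. k \<noteq> t \<longrightarrow> Wt T idx \<sigma> $ k < Wt T idx \<sigma> $ t)} =
         {I\<in>B. I \<subseteq> T \<and> t \<in> I \<and> (\<forall>k\<in>I. k \<noteq> t \<longrightarrow> \<sigma> k < \<sigma> t)}"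
proof -
  have c: "(Wt T idx \<sigma> $ k < Wt T idx \<sigma> $ t) = (k \<in> T \<and> \<sigma> k < \<sigma> t)" for k
  proof (cases "k \<in> T")
    case True
    then show ?thesis using assms(2) by (simp add: Wt_def)
  next
    case False
    have "\<sigma> t \<le> 2" using assms by auto
    then show ?thesis using False assms(2) by (simp add: Wt_def)
  qed
  show ?thesis
    unfolding c using assms(2) by (auto; blast)
qed

lemma forward:
  fixes E :: "'n::finite \<Rightarrow> 'n \<Rightarrow> bool"
  assumes sg: "simple_graph E" and ins: "inscribed (graph_associahedron E)"
  shows "disjoint_union_of_complete_graphs E"
proof (rule ccontr)
  assume "\<not> ?thesis"
  then obtain u w where "u \<noteq> w" "(u, w) \<in> {(x, y). E x y}\<^sup>*" "\<not> E u w"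
    unfolding disjoint_union_of_complete_graphs_def by blast
  then obtain p q s where pq: "E p q" and qs: "E q s" and ps: "p \<noteq> s" and nps: "\<not> E p s"
    using induced_path by metis
  have Esym: "\<And>u v. E u v \<Longrightarrow> E v u" and irr: "\<And>u. \<not> E u u"
    using sg unfolding simple_graph_def by blast+
  have pq': "p \<noteq> q" using pq irr by auto
  have qs': "q \<noteq> s" using qs irr by auto
  have nsp: "\<not> E s p" using nps Esym by blast
  have qp: "E q p" and sq: "E s q" using pq qs Esym by auto
  from ins obtain c :: "real^'n" and rr where
    cr: "\<And>v. v extreme_point_of graph_associahedron E \<Longrightarrow> dist v c = rr"
    unfolding inscribed_def by blast
  obtain idx :: "'n \<Rightarrow> nat" where idx: "inj idx"
    using finite_imp_inj_to_nat_seg[of "UNIV::'n set"] by auto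
  define T where "T = {p, q, s}"
  define B where "B = building_set E"
  define sig where "sig x y z = (\<lambda>i. if i = p then x else if i = q then y else (z::real))" for x y z
  define base where "base j = card {I\<in>B. j \<in> I \<and> (\<forall>k\<in>I. k \<noteq> j \<longrightarrow> k \<in> T \<or> idx k < idx j)}" for j
  define Qs where "Qs = {{p},{q},{s},{p,q},{q,s},{p,q,s}}"
  have conn_intro: "I \<in> B" if ne: "I \<noteq> {}"
    and cl: "\<And>u v. u \<in> I \<Longrightarrow> v \<in> I \<Longrightarrow> u = v \<or> E u v \<or> (\<exists>m\<in>I. E u m \<and> E m v)" for I
    unfolding B_def building_set_def induced_connected_def
  proof (intro CollectI conjI ne ballI)
    fix u v assume u: "u \<in> I" and v: "v \<in> I"
    let ?r = "{(x, y). x \<in> I \<and> y \<in> I \<and> E x y}"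
    consider "u = v" | "E u v" | m where "m \<in> I" "E u m" "E m v" using cl[OF u v] by blast
    then show "(u, v) \<in> ?r\<^sup>*"
    proof cases
      case 1 then show ?thesis by simp
    next
      case 2 then show ?thesis using u v by (intro r_into_rtrancl) simp
    next
      case 3
      then have "(u, m) \<in> ?r\<^sup>*" "(m, v) \<in> ?r\<^sup>*" using u v by (auto intro: r_into_rtrancl)
      then show ?thesis by (rule rtrancl_trans)
    qed
  qed
  have ps_notB: "{p, s} \<notin> B"
  proof
    assume "{p, s} \<in> B"
    then have h: "(p, s) \<in> {(x, y). x \<in> {p, s} \<and> y \<in> {p, s} \<and> E x y}\<^sup>*"
      unfolding B_def building_set_def induced_connected_def by blast
    have e: "{(x, y). x \<in> {p, s} \<and> y \<in> {p, s} \<and> E x y} = {}"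
      using irr nps nsp by auto
    have "(p, s) \<in> ({}::('n \<times> 'n) set)\<^sup>*" using h unfolding e .
    then show False using ps by simp
  qed
  have Q: "{I\<in>B. I \<subseteq> T} = Qs"
  proof
    show "{I\<in>B. I \<subseteq> T} \<subseteq> Qs"
    proof
      fix I assume I: "I \<in> {I\<in>B. I \<subseteq> T}"
      then have "I \<in> Pow {p, q, s}" unfolding T_def by auto
      then have "I \<in> {{}, {p}, {q}, {s}, {p,q}, {p,s}, {q,s}, {p,q,s}}"
        by (auto simp: Pow_insert insert_commute)
      moreover have "I \<noteq> {}" using I unfolding B_def building_set_def induced_connected_def by auto
      moreover have "I \<noteq> {p, s}" using I ps_notB by auto
      ultimately show "I \<in> Qs" unfolding Qs_def by auto
    qed
    show "Qs \<subseteq> {I\<in>B. I \<subseteq> T}"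
      unfolding Qs_def T_def
      using conn_intro pq qs qp sq by (auto intro!: conn_intro)
  qed
  have gen: "\<exists>v. v extreme_point_of graph_associahedron E \<and> (\<forall>j. j \<notin> T \<longrightarrow> v$j = base j) \<and>
       (\<forall>t\<in>T. v$t = card {I\<in>Qs. t \<in> I \<and> (\<forall>k\<in>I. k \<noteq> t \<longrightarrow> \<sigma> k < \<sigma> t)})"
    if bd: "\<forall>t\<in>T. 0 \<le> \<sigma> t \<and> \<sigma> t \<le> 2" and inj: "inj_on \<sigma> T" for \<sigma> :: "'n \<Rightarrow> real"
  proof -
    obtain v where v: "v extreme_point_of graph_associahedron E"
      and vj: "\<forall>j. v$j = real (card {I\<in>B. j \<in> I \<and> (\<forall>k\<in>I. k \<noteq> j \<longrightarrow> Wt T idx \<sigma> $ k < Wt T idx \<sigma> $ j)})"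
      using greedy_vertex[OF Wt_inj[OF idx inj bd], of E] unfolding B_def by blast
    have bd2: "\<forall>t\<in>T. \<sigma> t \<le> 2" using bd by blast
    have 1: "\<forall>j. j \<notin> T \<longrightarrow> v$j = base j"
      using vj Wt_notT[OF bd2] unfolding base_def by simp
    have "{I\<in>B. I \<subseteq> T \<and> P I} = {I\<in>Qs. P I}" for P
      using Q by blast
    then have 2: "\<forall>t\<in>T. v$t = card {I\<in>Qs. t \<in> I \<and> (\<forall>k\<in>I. k \<noteq> t \<longrightarrow> \<sigma> k < \<sigma> t)}"
      using vj Wt_T[OF bd2] by simp
    show ?thesis using v 1 2 by blast
  qed
  define X where "X = (\<Sum>j\<in>UNIV - T. (real (base j) - c$j)^2)"
  have dist_eq: "rr^2 = X + (v$p - c$p)^2 + (v$q - c$q)^2 + (v$s - c$s)^2"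
    if v: "v extreme_point_of graph_associahedron E" and vb: "\<forall>j. j \<notin> T \<longrightarrow> v$j = base j" for v
  proof -
    have "rr^2 = (norm (v - c))^2" using cr[OF v] by (simp add: dist_norm)
    also have "\<dots> = (\<Sum>j\<in>UNIV. (v$j - c$j)^2)"
      unfolding power2_norm_eq_inner inner_vec_def by (simp add: power2_eq_square)
    also have "\<dots> = (\<Sum>j\<in>UNIV - T. (v$j - c$j)^2) + (\<Sum>j\<in>T. (v$j - c$j)^2)"
      by (rule sum.subset_diff) auto
    also have "(\<Sum>j\<in>UNIV - T. (v$j - c$j)^2) = X"
      unfolding X_def using vb by (intro sum.cong) auto
    also have "(\<Sum>j\<in>T. (v$j - c$j)^2) = (v$p - c$p)^2 + (v$q - c$q)^2 + (v$s - c$s)^2"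
      unfolding T_def using pq' qs' ps by simp
    finally show ?thesis by simp
  qed
  have dist_eq':  "rr^2 = X + (x1 - c$p)^2 + (x2 - c$q)^2 + (x3 - c$s)^2"
    if bd: "\<forall>t\<in>T. 0 \<le> \<sigma> t \<and> \<sigma> t \<le> 2" and inj: "inj_on \<sigma> T"
    and c1: "card {I\<in>Qs. p \<in> I \<and> (\<forall>k\<in>I. k \<noteq> p \<longrightarrow> \<sigma> k < \<sigma> p)} = x1"
    and c2: "card {I\<in>Qs. q \<in> I \<and> (\<forall>k\<in>I. k \<noteq> q \<longrightarrow> \<sigma> k < \<sigma> q)} = x2"
    and c3: "card {I\<in>Qs. s \<in> I \<and> (\<forall>k\<in>I. k \<noteq> s \<longrightarrow> \<sigma> k < \<sigma> s)} = x3"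
    for \<sigma> :: "'n \<Rightarrow> real" and x1 x2 x3 :: nat
  proof -
    obtain v where v: "v extreme_point_of graph_associahedron E" and vb: "\<forall>j. j \<notin> T \<longrightarrow> v$j = base j"
      and vt: "\<forall>t\<in>T. v$t = card {I\<in>Qs. t \<in> I \<and> (\<forall>k\<in>I. k \<noteq> t \<longrightarrow> \<sigma> k < \<sigma> t)}"
      using gen[OF bd inj] by blast
    have "v$p = x1" "v$q = x2" "v$s = x3" using vt c1 c2 c3 unfolding T_def by auto
    then show ?thesis using dist_eq[OF v vb] by simp
  qed
  have injs: "inj_on (sig x y z) T" if "x \<noteq> y" "y \<noteq> z" "x \<noteq> z" for x y z
    using that pq' qs' ps unfolding inj_on_def T_def sig_def by auto
  have e1: "rr^2 = X + (1 - c$p)^2 + (4 - c$q)^2 + (1 - c$s)^2"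
  proof -
    have "{I\<in>Qs. p \<in> I \<and> (\<forall>k\<in>I. k \<noteq> p \<longrightarrow> sig 1 2 0 k < sig 1 2 0 p)} = {{p}}"
      unfolding Qs_def sig_def using pq' qs' ps by auto
    moreover have "{I\<in>Qs. q \<in> I \<and> (\<forall>k\<in>I. k \<noteq> q \<longrightarrow> sig 1 2 0 k < sig 1 2 0 q)} = {{q},{p,q},{q,s},{p,q,s}}"
      unfolding Qs_def sig_def using pq' qs' ps by auto
    moreover have "{I\<in>Qs. s \<in> I \<and> (\<forall>k\<in>I. k \<noteq> s \<longrightarrow> sig 1 2 0 k < sig 1 2 0 s)} = {{s}}"
      unfolding Qs_def sig_def using pq' qs' ps by auto
    moreover have "card {{q},{p,q},{q,s},{p,q,s}} = 4" using pq' qs' ps by (simp add: doubleton_eq_iff insert_eq_iff)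
    ultimately show ?thesis
      using dist_eq'[of "sig 1 2 0" 1 4 1] injs[of 1 2 0] unfolding T_def sig_def by simp
  qed
  have e2: "rr^2 = X + (3 - c$p)^2 + (2 - c$q)^2 + (1 - c$s)^2"
  proof -
    have "{I\<in>Qs. p \<in> I \<and> (\<forall>k\<in>I. k \<noteq> p \<longrightarrow> sig 2 1 0 k < sig 2 1 0 p)} = {{p},{p,q},{p,q,s}}"
      unfolding Qs_def sig_def using pq' qs' ps by auto
    moreover have "{I\<in>Qs. q \<in> I \<and> (\<forall>k\<in>I. k \<noteq> q \<longrightarrow> sig 2 1 0 k < sig 2 1 0 q)} = {{q},{q,s}}"
      unfolding Qs_def sig_def using pq' qs' ps by auto
    moreover have "{I\<in>Qs. s \<in> I \<and> (\<forall>k\<in>I. k \<noteq> s \<longrightarrow> sig 2 1 0 k < sig 2 1 0 s)} = {{s}}"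
      unfolding Qs_def sig_def using pq' qs' ps by auto
    moreover have "card {{p},{p,q},{p,q,s}} = 3" using pq' qs' ps by (simp add: doubleton_eq_iff insert_eq_iff)
    moreover have "card {{q},{q,s}} = 2" using pq' qs' ps by (simp add: doubleton_eq_iff insert_eq_iff)
    ultimately show ?thesis
      using dist_eq'[of "sig 2 1 0" 3 2 1] injs[of 2 1 0] unfolding T_def sig_def by simp
  qed
  have e3: "rr^2 = X + (1 - c$p)^2 + (2 - c$q)^2 + (3 - c$s)^2"
  proof -
    have "{I\<in>Qs. p \<in> I \<and> (\<forall>k\<in>I. k \<noteq> p \<longrightarrow> sig 0 1 2 k < sig 0 1 2 p)} = {{p}}"
      unfolding Qs_def sig_def using pq' qs' ps by auto
    moreover have "{I\<in>Qs. q \<in> I \<and> (\<forall>k\<in>I. k \<noteq> q \<longrightarrow> sig 0 1 2 k < sig 0 1 2 q)} = {{q},{p,q}}"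
      unfolding Qs_def sig_def using pq' qs' ps by auto
    moreover have "{I\<in>Qs. s \<in> I \<and> (\<forall>k\<in>I. k \<noteq> s \<longrightarrow> sig 0 1 2 k < sig 0 1 2 s)} = {{s},{q,s},{p,q,s}}"
      unfolding Qs_def sig_def using pq' qs' ps by auto
    moreover have "card {{q},{p,q}} = 2" using pq' qs' ps by (simp add: doubleton_eq_iff insert_eq_iff)
    moreover have "card {{s},{q,s},{p,q,s}} = 3" using pq' qs' ps by (simp add: doubleton_eq_iff insert_eq_iff)
    ultimately show ?thesis
      using dist_eq'[of "sig 0 1 2" 1 2 3] injs[of 0 1 2] unfolding T_def sig_def by simp
  qed
  have e4: "rr^2 = X + (2 - c$p)^2 + (1 - c$q)^2 + (3 - c$s)^2"
  proof -
    have "{I\<in>Qs. p \<in> I \<and> (\<forall>k\<in>I. k \<noteq> p \<longrightarrow> sig 1 0 2 k < sig 1 0 2 p)} = {{p},{p,q}}"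
      unfolding Qs_def sig_def using pq' qs' ps by auto
    moreover have "{I\<in>Qs. q \<in> I \<and> (\<forall>k\<in>I. k \<noteq> q \<longrightarrow> sig 1 0 2 k < sig 1 0 2 q)} = {{q}}"
      unfolding Qs_def sig_def using pq' qs' ps by auto
    moreover have "{I\<in>Qs. s \<in> I \<and> (\<forall>k\<in>I. k \<noteq> s \<longrightarrow> sig 1 0 2 k < sig 1 0 2 s)} = {{s},{q,s},{p,q,s}}"
      unfolding Qs_def sig_def using pq' qs' ps by auto
    moreover have "card {{p},{p,q}} = 2" using pq' qs' ps by (simp add: doubleton_eq_iff insert_eq_iff)
    moreover have "card {{s},{q,s},{p,q,s}} = 3" using pq' qs' ps by (simp add: doubleton_eq_iff insert_eq_iff)
    ultimately show ?thesis
      using dist_eq'[of "sig 1 0 2" 2 1 3] injs[of 1 0 2] unfolding T_def sig_def by simp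
  qed
  have a: "c$p - c$q = -1" using e1 e2 by (simp add: power2_eq_square algebra_simps)
  have b: "c$p = c$q" using e3 e4 by (simp add: power2_eq_square algebra_simps)
  show False using a b by simp
qed

theorem corollary4p21:
  fixes E :: "'n::finite \<Rightarrow> 'n \<Rightarrow> bool"
  assumes "simple_graph E"
  shows "inscribed (graph_associahedron E) \<longleftrightarrow> disjoint_union_of_complete_graphs E"
  using forward[OF assms] backward[OF assms] by blast

end
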